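(* Let $1,2,3$ be three distinct vertices of $G$ such that the induced subgraph $G[\{1,2,3\}]$ has edge set exactly $\{12,13,23\}$, and suppose $w_{12}\le w_{13}\le w_{23}$. If the matching game $\Gamma_G$ is population monotonic, then $w_{23}\ge w_{12}+w_{13}$.
   Context: $G=(V,E;w)$ is a finite simple graph with edge weights $w:E\to\mathbb{R}$, $w_e>0$ for all $e\in E$; $w_{ij}$ denotes the weight of edge $ij$. The matching game on $G$ is the cooperative game $\Gamma_G=(N,\gamma)$ with player set $N=V$ and, for $S\subseteq N$, $\gamma(S)$ equal to the maximum weight of a matching in the induced subgraph $G[S]$ (so $\gamma(\emptyset)=0$). A population monotonic allocation scheme (PMAS) is a family $(\boldsymbol{x}_S)_{\emptyset\neq S\subseteq N}$ with $\boldsymbol{x}_S=(x_{S,i})_{i\in S}\in\mathbb{R}^S$ such that (efficiency) $\sum_{i\in S}x_{S,i}=\gamma(S)$ for every nonempty $S\subseteq N$, and (monotonicity) $x_{S,i}\le x_{T,i}$ whenever $\emptyset\ne S\subseteq T\subseteq N$ and $i\in S$. $\Gamma_G$ is called population monotonic if it admits a PMAS. *)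

theory Defs
  imports Complex_Main "HOL-Library.Disjoint_Sets"
begin

definition simple_graph :: "'a set \<Rightarrow> 'a set set \<Rightarrow> bool" where
  "simple_graph V E \<longleftrightarrow> finite V \<and> (\<forall>e\<in>E. e \<subseteq> V \<and> card e = 2)"

definition induced_edges :: "'a set set \<Rightarrow> 'a set \<Rightarrow> 'a set set" where
  "induced_edges E S = {e \<in> E. e \<subseteq> S}"

definition matchings :: "'a set set \<Rightarrow> 'a set \<Rightarrow> 'a set set set" where
  "matchings E S = {M. M \<subseteq> induced_edges E S \<and> disjoint M}"

definition gamma :: "'a set set \<Rightarrow> ('a set \<Rightarrow> real) \<Rightarrow> 'a set \<Rightarrow> real" where
  "gamma E w S = Max ((\<lambda>M. \<Sum>e\<in>M. w e) ` matchings E S)"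

text \<open>Population monotonic allocation scheme; x S i is the payoff of player i in coalition S.\<close>
definition is_PMAS :: "'a set \<Rightarrow> 'a set set \<Rightarrow> ('a set \<Rightarrow> real) \<Rightarrow> ('a set \<Rightarrow> 'a \<Rightarrow> real) \<Rightarrow> bool" where
  "is_PMAS V E w x \<longleftrightarrow>
     (\<forall>S. S \<subseteq> V \<and> S \<noteq> {} \<longrightarrow> (\<Sum>i\<in>S. x S i) = gamma E w S) \<and>
     (\<forall>S T i. S \<noteq> {} \<and> S \<subseteq> T \<and> T \<subseteq> V \<and> i \<in> S \<longrightarrow> x S i \<le> x T i)"

definition population_monotonic :: "'a set \<Rightarrow> 'a set set \<Rightarrow> ('a set \<Rightarrow> real) \<Rightarrow> bool" where
  "population_monotonic V E w \<longleftrightarrow> (\<exists>x. is_PMAS V E w x)"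

end

theory Submission
  imports Defs
begin

lemma gamma_eq:
  assumes "finite (matchings E S)" "m \<in> matchings E S" "(\<Sum>e\<in>m. w e) = c"
    "\<forall>M\<in>matchings E S. (\<Sum>e\<in>M. w e) \<le> c"
  shows "gamma E w S = c"
  unfolding gamma_def
  by (rule Max_eqI) (use assms in auto)

lemma ind_sub: "S \<subseteq> T \<Longrightarrow> induced_edges E S = {e \<in> induced_edges E T. e \<subseteq> S}"
  unfolding induced_edges_def by auto

lemma fin_match: "finite (induced_edges E S) \<Longrightarrow> finite (matchings E S)"
  unfolding matchings_def
  by (rule finite_subset[of _ "Pow (induced_edges E S)"]) auto

theorem mainTheorem1:
  fixes V :: "'a set" and E :: "'a set set" and w :: "'a set \<Rightarrow> real"
    and v1 v2 v3 :: 'a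
  assumes "simple_graph V E"
    and "\<forall>e\<in>E. w e > 0"
    and "v1 \<in> V" "v2 \<in> V" "v3 \<in> V"
    and "v1 \<noteq> v2" "v1 \<noteq> v3" "v2 \<noteq> v3"
    and "induced_edges E {v1, v2, v3} = {{v1, v2}, {v1, v3}, {v2, v3}}"
    and "w {v1, v2} \<le> w {v1, v3}" "w {v1, v3} \<le> w {v2, v3}"
    and "population_monotonic V E w"
  shows "w {v2, v3} \<ge> w {v1, v2} + w {v1, v3}"
proof -
  note ne = assms(6,7,8)
  let ?T = "{v1, v2, v3}"
  have inE: "{v1,v2} \<in> E" "{v1,v3} \<in> E" "{v2,v3} \<in> E"
    using assms(9) unfolding induced_edges_def by blast+
  have pos: "w {v1,v2} > 0" "w {v1,v3} > 0" "w {v2,v3} > 0" using inE assms(2) by auto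
  have fin: "finite (matchings E S)" if "S \<subseteq> ?T" for S
  proof (rule fin_match)
    show "finite (induced_edges E S)" using ind_sub[OF that, of E] assms(9) by simp
  qed
  obtain x where x: "is_PMAS V E w x" using assms(12) unfolding population_monotonic_def by blast
  have eff: "\<And>S. S \<subseteq> V \<Longrightarrow> S \<noteq> {} \<Longrightarrow> (\<Sum>i\<in>S. x S i) = gamma E w S"
   and mon: "\<And>S T i. S \<noteq> {} \<Longrightarrow> S \<subseteq> T \<Longrightarrow> T \<subseteq> V \<Longrightarrow> i \<in> S \<Longrightarrow> x S i \<le> x T i"
    using x unfolding is_PMAS_def by blast+
  have g1: "gamma E w {v1} = 0"
  proof (rule gamma_eq[where m="{}"])
    have "induced_edges E {v1} = {}" using ind_sub[of "{v1}" ?T E] assms(9) ne by auto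
    hence "matchings E {v1} = {{}}" unfolding matchings_def by auto
    thus "finite (matchings E {v1})" "{} \<in> matchings E {v1}"
      "\<forall>M\<in>matchings E {v1}. (\<Sum>e\<in>M. w e) \<le> 0" by auto
  qed simp
  have x1: "x {v1} v1 = 0" using eff[of "{v1}"] g1 assms(3) by simp
  have gp: "gamma E w {a,b} = w {a,b}" if ie: "induced_edges E {a,b} = {{a,b}}" and wp: "w {a,b} > 0" for a b
  proof (rule gamma_eq[where m="{{a,b}}"])
    have M: "matchings E {a,b} = {{}, {{a,b}}}" using ie unfolding matchings_def by (auto simp: disjoint_def)
    thus "finite (matchings E {a,b})" "{{a,b}} \<in> matchings E {a,b}"
      "\<forall>M\<in>matchings E {a,b}. (\<Sum>e\<in>M. w e) \<le> w {a,b}" using wp by auto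
  qed simp
  have g12: "gamma E w {v1,v2} = w {v1,v2}"
  proof (rule gp)
    show "induced_edges E {v1,v2} = {{v1,v2}}" using ind_sub[of "{v1,v2}" ?T E] assms(9) ne by (auto simp: doubleton_eq_iff)
  qed (use pos in auto)
  have g13: "gamma E w {v1,v3} = w {v1,v3}"
  proof (rule gp)
    show "induced_edges E {v1,v3} = {{v1,v3}}" using ind_sub[of "{v1,v3}" ?T E] assms(9) ne by (auto simp: doubleton_eq_iff)
  qed (use pos in auto)
  have g23: "gamma E w {v2,v3} = w {v2,v3}"
  proof (rule gp)
    show "induced_edges E {v2,v3} = {{v2,v3}}" using ind_sub[of "{v2,v3}" ?T E] assms(9) ne by (auto simp: doubleton_eq_iff)
  qed (use pos in auto)
  have gT: "gamma E w ?T = w {v2,v3}"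
  proof (rule gamma_eq[where m="{{v2,v3}}"])
    show "finite (matchings E ?T)" using fin by simp
    show "{{v2,v3}} \<in> matchings E ?T" using assms(9) unfolding matchings_def by (auto simp: disjoint_def)
    show "\<forall>M\<in>matchings E ?T. (\<Sum>e\<in>M. w e) \<le> w {v2,v3}"
    proof
      fix M assume "M \<in> matchings E ?T"
      hence Ms: "M \<subseteq> {{v1, v2}, {v1, v3}, {v2, v3}}" and dj: "disjoint M"
        using assms(9) unfolding matchings_def by auto
      show "(\<Sum>e\<in>M. w e) \<le> w {v2,v3}"
      proof (cases "M = {}")
        case True thus ?thesis using pos by simp
      next
        case False
        then obtain e where e: "e \<in> M" by blast
        have "M = {e}"
        proof
          show "M \<subseteq> {e}"
          proof
            fix f assume f: "f \<in> M"
            show "f \<in> {e}"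
            proof (rule ccontr)
              assume "f \<notin> {e}"
              hence "e \<noteq> f" by simp
              hence "e \<inter> f = {}" using disjointD[OF dj e f] by simp
              moreover have "e \<in> {{v1, v2}, {v1, v3}, {v2, v3}}" "f \<in> {{v1, v2}, {v1, v3}, {v2, v3}}"
                by (rule subsetD[OF Ms e], rule subsetD[OF Ms f])
              ultimately show False by (elim insertE emptyE; simp)
            qed
          qed
        qed (use e in auto)
        thus ?thesis using e Ms assms(10,11) by auto
      qed
    qed
  qed simp
  have TV: "?T \<subseteq> V" using assms(3-5) by auto
  have sT: "x ?T v1 + x ?T v2 + x ?T v3 = w {v2,v3}"
    using eff[OF TV] gT ne by simp
  have s12: "x {v1,v2} v1 + x {v1,v2} v2 = w {v1,v2}" using eff[of "{v1,v2}"] g12 ne assms(3-5) by simp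
  have s13: "x {v1,v3} v1 + x {v1,v3} v3 = w {v1,v3}" using eff[of "{v1,v3}"] g13 ne assms(3-5) by simp
  have s23: "x {v2,v3} v2 + x {v2,v3} v3 = w {v2,v3}" using eff[of "{v2,v3}"] g23 ne assms(3-5) by simp
  have m1: "x {v1,v2} v1 \<le> x ?T v1" "x {v1,v2} v2 \<le> x ?T v2"
    "x {v1,v3} v1 \<le> x ?T v1" "x {v1,v3} v3 \<le> x ?T v3"
    "x {v2,v3} v2 \<le> x ?T v2" "x {v2,v3} v3 \<le> x ?T v3"
    by (rule mon[OF _ _ TV]; auto)+
  have m0: "x {v1} v1 \<le> x {v1,v2} v1" by (rule mon) (use TV in auto)
  show ?thesis using sT s12 s13 s23 m1 m0 x1 by linarith
qed

end
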